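(* Let $\Gamma$ be a finite metric tree and let $f\colon\Gamma\to[0,\infty)$ be a continuous edge-linear function. Any unimodal decomposition of $f$ can be modified, without changing the number of components, to a unimodal decomposition of $f$ in which every component attains its maximum at a vertex of $\Gamma$.
   Context: A finite metric tree $\Gamma$ is a compact contractible 1-dimensional metric space stratified into finitely many vertices and open edges. A function is edge-linear if its restriction to each edge is affine with respect to the edge's metric. A continuous function $u\colon\Gamma\to[0,\infty)$ with maximal value $M$ is unimodal if its upper excursion sets $u^{-1}([c,\infty))$ are contractible for all $0<c\le M$ (and empty for $c>M$). A unimodal decomposition of $f$ is a finite family of unimodal functions whose pointwise sum is $f$. *)

theory Defs
  imports "HOL-Analysis.Analysis"
begin

text \<open>Each edge is given as a pair
(l, g) where l > 0 is its length and g restricted to the interval from 0 to l is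
an isometric chart of the closed edge with respect to the edge's metric (hence a
homeomorphism of the interval onto the closed edge, i.e. an arc), whose endpoints
are vertices; the open edge is the image of the open interval.\<close>

definition open_edge :: "real \<times> (real \<Rightarrow> 'a) \<Rightarrow> 'a set" where
  "open_edge e = snd e ` {0<..<fst e}"

definition finite_metric_tree ::
  "('a::metric_space) set \<Rightarrow> 'a set \<Rightarrow> (real \<times> (real \<Rightarrow> 'a)) set \<Rightarrow> bool" where
  "finite_metric_tree S V E \<longleftrightarrow>
     compact S \<and> contractible S \<and> finite V \<and> finite E \<and> V \<subseteq> S \<and>
     (\<forall>(l, g) \<in> E. 0 < l \<and> continuous_on {0..l} g \<and> inj_on g {0..l} \<and>
        g ` {0..l} \<subseteq> S \<and> g 0 \<in> V \<and> g l \<in> V \<and> g ` {0<..<l} \<inter> V = {}) \<and>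
     (\<forall>e1 \<in> E. \<forall>e2 \<in> E. e1 \<noteq> e2 \<longrightarrow> open_edge e1 \<inter> open_edge e2 = {}) \<and>
     S = V \<union> (\<Union>e \<in> E. open_edge e)"

definition edge_linear :: "(real \<times> (real \<Rightarrow> 'a)) set \<Rightarrow> ('a \<Rightarrow> real) \<Rightarrow> bool" where
  "edge_linear E f \<longleftrightarrow>
     (\<forall>(l, g) \<in> E. \<exists>a b. \<forall>t \<in> {0..l}. f (g t) = a * t + b)"

definition unimodal :: "('a::metric_space) set \<Rightarrow> ('a \<Rightarrow> real) \<Rightarrow> bool" where
  "unimodal S u \<longleftrightarrow>
     continuous_on S u \<and> (\<forall>x \<in> S. 0 \<le> u x) \<and>
     (\<exists>M. (\<exists>x \<in> S. u x = M) \<and> (\<forall>x \<in> S. u x \<le> M) \<and>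
        (\<forall>c. 0 < c \<and> c \<le> M \<longrightarrow> contractible {x \<in> S. c \<le> u x}) \<and>
        (\<forall>c. M < c \<longrightarrow> {x \<in> S. c \<le> u x} = {}))"

definition unimodal_decomposition ::
  "('a::metric_space) set \<Rightarrow> ('a \<Rightarrow> real) \<Rightarrow> nat \<Rightarrow> (nat \<Rightarrow> 'a \<Rightarrow> real) \<Rightarrow> bool" where
  "unimodal_decomposition S f n us \<longleftrightarrow>
     (\<forall>i < n. unimodal S (us i)) \<and> (\<forall>x \<in> S. f x = (\<Sum>i<n. us i x))"

end

theory Submission
  imports Defs
begin

definition kemb :: "'a::metric_space \<Rightarrow> 'a \<Rightarrow> ('a \<Rightarrow>\<^sub>C real)" where
  "kemb x0 x = Bcontfun (\<lambda>y. dist x y - dist x0 y)"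

lemma kemb_apply: "apply_bcontfun (kemb x0 x) = (\<lambda>y. dist x y - dist x0 y)"
proof -
  have "(\<lambda>y. dist x y - dist x0 y) \<in> bcontfun"
    unfolding bcontfun_def
  proof safe
    show "continuous_on UNIV (\<lambda>y. dist x y - dist x0 y)"
      by (intro continuous_intros)
    show "bounded (range (\<lambda>y. dist x y - dist x0 y))"
      unfolding bounded_iff
      by (rule exI[of _ "dist x x0"]) (auto simp: abs_le_iff, (metis dist_triangle dist_commute add.commute diff_le_eq)+)
  qed
  then show ?thesis unfolding kemb_def by (simp add: Bcontfun_inverse)
qed

lemma kemb_dist: "dist (kemb x0 x) (kemb x0 x') \<le> dist x x'"
proof (rule dist_bound)
  fix y
  show "dist (apply_bcontfun (kemb x0 x) y) (apply_bcontfun (kemb x0 x') y) \<le> dist x x'"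
    unfolding kemb_apply dist_real_def
    by (auto simp: abs_le_iff, (metis dist_triangle dist_commute add.commute diff_le_eq)+)
qed

lemma kemb_cont: "continuous_on S (kemb x0)"
  unfolding continuous_on_iff
  by (metis kemb_dist le_less_trans)

lemma kemb_inj: "inj (kemb x0)"
proof (rule injI)
  fix x x' assume "kemb x0 x = kemb x0 x'"
  then have "apply_bcontfun (kemb x0 x) x' = apply_bcontfun (kemb x0 x') x'" by simp
  then show "x = x'" by (simp add: kemb_apply)
qed

lemma contractible_log:
  fixes S :: "'a::metric_space set" and \<rho> :: "'a \<Rightarrow> complex"
  assumes "compact S" "contractible S" "continuous_on S \<rho>" "\<forall>x\<in>S. \<rho> x \<noteq> 0"
  shows "\<exists>\<theta>. continuous_on S \<theta> \<and> (\<forall>x\<in>S. \<rho> x = exp (\<theta> x))"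
proof (cases "S = {}")
  case True then show ?thesis by auto
next
  case False
  then obtain x0 where "x0 \<in> S" by auto
  define e where "e = kemb x0"
  obtain h where hom: "homeomorphism S (e ` S) e h"
    using homeomorphism_compact[OF assms(1) kemb_cont[of S x0] refl] kemb_inj[of x0]
    unfolding e_def by (meson inj_on_subset subset_UNIV)
  have "homeomorphic_maps (top_of_set S) (top_of_set (e ` S)) e h"
    using hom unfolding homeomorphic_maps_def homeomorphism_def by auto
  then have "contractible (e ` S)"
    using assms(2) homeomorphic_space_contractibility homeomorphic_maps_imp_homeomorphic_space
      contractible_space_top_of_set by metis
  then have "Borsukian (e ` S)" by (rule contractible_imp_Borsukian)
  moreover have "continuous_on (e ` S) (\<rho> \<circ> h)"
    using hom assms(3) unfolding homeomorphism_def
    by (metis continuous_on_compose)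
  moreover have "(\<rho> \<circ> h) \<in> e ` S \<rightarrow> - {0}"
    using hom assms(4) unfolding homeomorphism_def by auto
  ultimately obtain g where g: "continuous_on (e ` S) g" "\<forall>y\<in>e ` S. (\<rho> \<circ> h) y = exp (g y)"
    unfolding Borsukian_continuous_logarithm by blast
  show ?thesis
  proof (intro exI conjI)
    show "continuous_on S (g \<circ> e)"
      using g(1) continuous_on_compose kemb_cont e_def by blast
    show "\<forall>x\<in>S. \<rho> x = exp ((g \<circ> e) x)"
      using g(2) hom unfolding homeomorphism_def by auto
  qed
qed

lemma exp1_sep:
  fixes z w :: complex
  assumes "exp z = 1" "exp w = 1" "z \<noteq> w"
  shows "1 \<le> norm (z - w)"
proof -
  have "exp (z - w) = 1" using assms by (simp add: exp_diff)
  then obtain n :: int where n: "Re (z - w) = 0" "Im (z - w) = of_int (2 * n) * pi"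
    unfolding exp_eq_1 by blast
  have "n \<noteq> 0"
  proof
    assume "n = 0" then have "z - w = 0" using n by (simp add: complex_eq_iff)
    then show False using assms by simp
  qed
  then have "1 \<le> \<bar>of_int (2 * n) * pi\<bar>"
  proof -
    have "1 \<le> \<bar>real_of_int (2*n)\<bar>" using \<open>n \<noteq> 0\<close> by linarith
    moreover have "1 \<le> pi" using pi_gt3 by linarith
    ultimately have "1 * 1 \<le> \<bar>real_of_int (2*n)\<bar> * pi" by (intro mult_mono) auto
    then show ?thesis by (simp add: abs_mult)
  qed
  also have "\<dots> \<le> norm (z - w)" using abs_Im_le_cmod[of "z - w"] n by simp
  finally show ?thesis .
qed

lemma fmtD:
  assumes "finite_metric_tree S V E"
  shows "compact S" "contractible S" "finite V" "finite E" "V \<subseteq> S"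
   "\<forall>(l, g) \<in> E. 0 < l \<and> continuous_on {0..l} g \<and> inj_on g {0..l} \<and>
        g ` {0..l} \<subseteq> S \<and> g 0 \<in> V \<and> g l \<in> V \<and> g ` {0<..<l} \<inter> V = {}"
   "\<forall>e1 \<in> E. \<forall>e2 \<in> E. e1 \<noteq> e2 \<longrightarrow> open_edge e1 \<inter> open_edge e2 = {}"
   "S = V \<union> (\<Union>e \<in> E. open_edge e)"
proof -
  note h = assms[unfolded finite_metric_tree_def]
  show "compact S" using h by (elim conjE) assumption
  show "contractible S" using h by (elim conjE) assumption
  show "finite V" using h by (elim conjE) assumption
  show "finite E" using h by (elim conjE) assumption
  show "V \<subseteq> S" using h by (elim conjE) assumption
  show "\<forall>(l, g) \<in> E. 0 < l \<and> continuous_on {0..l} g \<and> inj_on g {0..l} \<and>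
        g ` {0..l} \<subseteq> S \<and> g 0 \<in> V \<and> g l \<in> V \<and> g ` {0<..<l} \<inter> V = {}"
    using h by (elim conjE) assumption
  show "\<forall>e1 \<in> E. \<forall>e2 \<in> E. e1 \<noteq> e2 \<longrightarrow> open_edge e1 \<inter> open_edge e2 = {}"
    using h by (elim conjE) assumption
  show "S = V \<union> (\<Union>e \<in> E. open_edge e)" using h by (elim conjE) assumption
qed

lemma edge_props:
  assumes T: "finite_metric_tree S V E" and e: "(l, g) \<in> E"
  shows "0 < l" "continuous_on {0..l} g" "inj_on g {0..l}" "g ` {0..l} \<subseteq> S"
    "g 0 \<in> V" "g l \<in> V" "g ` {0<..<l} \<inter> V = {}" "V \<subseteq> S" "compact S"
    "contractible S"
proof -
  have h: "case (l, g) of (l, g) \<Rightarrow> 0 < l \<and> continuous_on {0..l} g \<and> inj_on g {0..l} \<and>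
        g ` {0..l} \<subseteq> S \<and> g 0 \<in> V \<and> g l \<in> V \<and> g ` {0<..<l} \<inter> V = {}"
    using bspec[OF fmtD(6)[OF T] e] .
  then show "0 < l" "continuous_on {0..l} g" "inj_on g {0..l}" "g ` {0..l} \<subseteq> S"
    "g 0 \<in> V" "g l \<in> V" "g ` {0<..<l} \<inter> V = {}" by auto
  show "V \<subseteq> S" "compact S" "contractible S" using fmtD[OF T] by auto
qed

lemma compl_edge_eq:
  assumes T: "finite_metric_tree S V E" and e: "(l, g) \<in> E"
  shows "S - g ` {0<..<l} = V \<union> (\<Union>(l', g') \<in> E - {(l, g)}. g' ` {0..l'})"
proof
  show "S - g ` {0<..<l} \<subseteq> V \<union> (\<Union>(l', g') \<in> E - {(l, g)}. g' ` {0..l'})"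
  proof
    fix x assume x: "x \<in> S - g ` {0<..<l}"
    have "S = V \<union> (\<Union>e \<in> E. open_edge e)" using fmtD[OF T] by auto
    then consider "x \<in> V" | e' where "e' \<in> E" "x \<in> open_edge e'" using x by auto
    then show "x \<in> V \<union> (\<Union>(l', g') \<in> E - {(l, g)}. g' ` {0..l'})"
    proof cases
      case 2
      obtain l' g' where e': "e' = (l', g')" by fastforce
      have "e' \<noteq> (l, g)" using 2 x by (auto simp: open_edge_def)
      then have m: "(l', g') \<in> E - {(l, g)}" using 2 e' by auto
      have "x \<in> (\<lambda>(l', g'). g' ` {0..l'}) (l', g')" using 2 e' by (auto simp: open_edge_def)
      then show ?thesis using m by blast
    qed auto
  qed
  show "V \<union> (\<Union>(l', g') \<in> E - {(l, g)}. g' ` {0..l'}) \<subseteq> S - g ` {0<..<l}"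
  proof
    fix x assume "x \<in> V \<union> (\<Union>(l', g') \<in> E - {(l, g)}. g' ` {0..l'})"
    then consider "x \<in> V" | l' g' t where "(l', g') \<in> E" "(l', g') \<noteq> (l, g)" "t \<in> {0..l'}" "x = g' t"
    proof -
      assume c1: "x \<in> V \<Longrightarrow> thesis"
        and c2: "\<And>l' g' t. (l', g') \<in> E \<Longrightarrow> (l', g') \<noteq> (l, g) \<Longrightarrow> t \<in> {0..l'} \<Longrightarrow> x = g' t \<Longrightarrow> thesis"
      show thesis
      proof (cases "x \<in> V")
        case True then show ?thesis using c1 by blast
      next
        case False
        then obtain e' where e': "e' \<in> E - {(l, g)}" "x \<in> (\<lambda>(l', g'). g' ` {0..l'}) e'"
          using \<open>x \<in> V \<union> _\<close> by blast
        obtain l' g' where "e' = (l', g')" by fastforce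
        then show ?thesis using e' c2 by auto
      qed
    qed
    then show "x \<in> S - g ` {0<..<l}"
    proof cases
      case 1 then show ?thesis using edge_props[OF T e] by auto
    next
      case 2
      have S: "x \<in> S" using 2 edge_props[OF T 2(1)] by auto
      show ?thesis
      proof (cases "t = 0 \<or> t = l'")
        case True
        then have "x \<in> V" using 2 edge_props[OF T 2(1)] by auto
        then show ?thesis using S edge_props[OF T e] by auto
      next
        case False
        then have "x \<in> open_edge (l', g')" using 2 by (auto simp: open_edge_def)
        moreover have "open_edge (l', g') \<inter> open_edge (l, g) = {}"
          using fmtD(7)[OF T] 2 e by blast
        ultimately show ?thesis using S by (auto simp: open_edge_def)
      qed
    qed
  qed
qed

lemma closed_compl_edge:
  assumes T: "finite_metric_tree S V E" and e: "(l, g) \<in> E"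
  shows "closed (S - g ` {0<..<l})"
proof -
  have fin: "finite V" "finite E" using fmtD[OF T] by auto
  have "closed (\<Union>(l', g') \<in> E - {(l, g)}. g' ` {0..l'})"
  proof (rule closed_Union)
    show "finite ((\<lambda>(l', g'). g' ` {0..l'}) ` (E - {(l, g)}))" using fin by auto
    show "\<forall>T\<in>(\<lambda>(l', g'). g' ` {0..l'}) ` (E - {(l, g)}). closed T"
    proof
      fix T assume "T \<in> (\<lambda>(l', g'). g' ` {0..l'}) ` (E - {(l, g)})"
      then obtain l' g' where "(l', g') \<in> E" "T = g' ` {0..l'}" by auto
      then show "closed T"
        using edge_props(2)[OF assms(1)] by (metis compact_Icc compact_continuous_image compact_imp_closed)
    qed
  qed
  then show ?thesis unfolding compl_edge_eq[OF T e] using fin finite_imp_closed closed_Un by blast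
qed

lemma edge_more:
  assumes T: "finite_metric_tree S V E" and e: "(l, g) \<in> E"
  shows "compact (g ` {0..l})" "closed (g ` {0..l})"
    "continuous_on (g ` {0..l}) (the_inv_into {0..l} g)"
    "\<And>x. x \<in> g ` {0..l} \<Longrightarrow> g (the_inv_into {0..l} g x) = x"
    "\<And>x. x \<in> g ` {0..l} \<Longrightarrow> the_inv_into {0..l} g x \<in> {0..l}"
    "\<And>t. t \<in> {0..l} \<Longrightarrow> the_inv_into {0..l} g (g t) = t"
    "g 0 \<notin> g ` {0<..<l}" "g l \<notin> g ` {0<..<l}"
    "g ` {0..l} = g ` {0<..<l} \<union> {g 0, g l}"
    "g ` {0<..<l} \<subseteq> g ` {0..l}"
    "g 0 \<noteq> g l"
proof -
  note p = edge_props[OF T e]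
  show c: "compact (g ` {0..l})" using p compact_continuous_image by blast
  then show "closed (g ` {0..l})" by (rule compact_imp_closed)
  show "continuous_on (g ` {0..l}) (the_inv_into {0..l} g)"
    using continuous_on_inv[OF p(2)] p(3) the_inv_into_f_f by (metis compact_Icc)
  show "\<And>x. x \<in> g ` {0..l} \<Longrightarrow> g (the_inv_into {0..l} g x) = x"
    using p(3) by (simp add: f_the_inv_into_f)
  show "\<And>x. x \<in> g ` {0..l} \<Longrightarrow> the_inv_into {0..l} g x \<in> {0..l}"
    using p(3) the_inv_into_into[of g "{0..l}"] by blast
  show "\<And>t. t \<in> {0..l} \<Longrightarrow> the_inv_into {0..l} g (g t) = t"
    using p(3) by (simp add: the_inv_into_f_f)
  show "g 0 \<notin> g ` {0<..<l}" "g l \<notin> g ` {0<..<l}" using p by auto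
  show "g ` {0..l} = g ` {0<..<l} \<union> {g 0, g l}"
  proof
    show "g ` {0..l} \<subseteq> g ` {0<..<l} \<union> {g 0, g l}"
    proof
      fix x assume "x \<in> g ` {0..l}"
      then obtain t where "t \<in> {0..l}" "x = g t" by auto
      then show "x \<in> g ` {0<..<l} \<union> {g 0, g l}"
        by (cases "t = 0 \<or> t = l") auto
    qed
    show "g ` {0<..<l} \<union> {g 0, g l} \<subseteq> g ` {0..l}" using p(1) by auto
  qed
  show "g ` {0<..<l} \<subseteq> g ` {0..l}" by auto
  show "g 0 \<noteq> g l" using p(1) p(3) unfolding inj_on_def
    by (metis atLeastAtMost_iff less_eq_real_def order_refl less_irrefl)
qed

lemma edge_sep:
  assumes T: "finite_metric_tree S V E" and e: "(l, g) \<in> E"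
  shows "\<exists>Q Q'. closed Q \<and> closed Q' \<and> Q \<union> Q' = S - g ` {0<..<l} \<and> Q \<inter> Q' = {}
     \<and> g 0 \<in> Q \<and> g l \<in> Q'"
proof -
  note p = edge_props[OF T e] and m = edge_more[OF T e]
  define gi where "gi = the_inv_into {0..l} g"
  define oe where "oe = g ` {0<..<l}"
  define \<rho> where "\<rho> x = (if x \<in> oe then exp (2 * pi * \<i> * of_real (gi x / l)) else 1)" for x
  have rho_ce: "\<rho> x = exp (2 * pi * \<i> * of_real (gi x / l))" if "x \<in> g ` {0..l}" for x
  proof (cases "x \<in> oe")
    case False
    then have "x = g 0 \<or> x = g l" using that m(9) oe_def by auto
    then show ?thesis
    proof
      assume "x = g 0" then show ?thesis using False m(6)[of 0] p(1) by (simp add: \<rho>_def gi_def)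
    next
      assume "x = g l"
      then have "gi x = l" using m(6)[of l] p(1) by (simp add: gi_def)
      then show ?thesis using False p(1) by (simp add: \<rho>_def)
    qed
  qed (simp add: \<rho>_def)
  have cl1: "closed (S - oe)" using closed_compl_edge[OF T e] oe_def by simp
  have SU: "S = g ` {0..l} \<union> (S - oe)" using p(4) m(10) oe_def by auto
  have "continuous_on S \<rho>"
  proof -
    have "continuous_on (g ` {0..l} \<union> (S - oe)) \<rho>"
    proof (rule continuous_on_closed_Un)
      show "continuous_on (g ` {0..l}) \<rho>"
      proof (rule continuous_on_cong[THEN iffD1, OF refl _ ])
        show "continuous_on (g ` {0..l}) (\<lambda>x. exp (2 * pi * \<i> * of_real (gi x / l)))"
          using m(3) p(1) unfolding gi_def by (intro continuous_intros) auto
      qed (use rho_ce in auto)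
      show "continuous_on (S - oe) \<rho>"
        by (rule continuous_on_cong[THEN iffD1, OF refl _ continuous_on_const[of _ 1]]) (auto simp: \<rho>_def)
    qed (use m(2) cl1 in auto)
    then show ?thesis using SU by simp
  qed
  moreover have "\<forall>x\<in>S. \<rho> x \<noteq> 0" by (simp add: \<rho>_def)
  ultimately obtain \<theta> where th: "continuous_on S \<theta>" "\<forall>x\<in>S. \<rho> x = exp (\<theta> x)"
    using contractible_log[OF p(9) p(10)] by blast
  define k where "k t = \<theta> (g t) - 2 * pi * \<i> * of_real (t / l)" for t
  have kexp: "exp (k t) = 1" if "t \<in> {0..l}" for t
  proof -
    have "g t \<in> S" using that p(4) by auto
    then have "exp (\<theta> (g t)) = exp (2 * pi * \<i> * of_real (t / l))"
      using th(2) rho_ce[of "g t"] m(6)[OF that] that unfolding gi_def by auto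
    then show ?thesis unfolding k_def by (simp add: exp_diff)
  qed
  have "k constant_on {0..l}"
  proof (rule continuous_discrete_range_constant)
    show "connected {0..l::real}" by simp
    show "continuous_on {0..l} k"
      unfolding k_def
      by (intro continuous_intros continuous_on_compose2[OF th(1) p(2)]) (use p(4) p(1) in auto)
    show "\<exists>e>0. \<forall>y. y \<in> {0..l} \<and> k y \<noteq> k x \<longrightarrow> e \<le> norm (k y - k x)" if "x \<in> {0..l}" for x
      using kexp exp1_sep that by (intro exI[of _ 1]) auto
  qed
  then have "k l = k 0" using p(1) unfolding constant_on_def by auto
  then have thb: "\<theta> (g l) = \<theta> (g 0) + 2 * pi * \<i>" using p(1) unfolding k_def by (simp add: algebra_simps)
  define Q where "Q = {x \<in> S - oe. \<theta> x = \<theta> (g 0)}"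
  define Q' where "Q' = (S - oe) \<inter> (\<lambda>x. norm (\<theta> x - \<theta> (g 0))) -` {1..}"
  have ex1: "exp (\<theta> x) = 1" if "x \<in> S - oe" for x using th(2) that by (auto simp: \<rho>_def)
  have g0: "g 0 \<in> S - oe" "g l \<in> S - oe" using p m oe_def by auto
  show ?thesis
  proof (intro exI conjI)
    show "closed Q" unfolding Q_def
      by (rule continuous_closed_preimage_constant[OF continuous_on_subset[OF th(1)] cl1]) auto
    show "closed Q'" unfolding Q'_def
    proof (rule continuous_closed_preimage[OF _ cl1])
      show "continuous_on (S - oe) (\<lambda>x. norm (\<theta> x - \<theta> (g 0)))"
        by (intro continuous_intros continuous_on_subset[OF th(1)]) auto
    qed auto
    show "Q \<union> Q' = S - g ` {0<..<l}"
      unfolding Q_def Q'_def oe_def[symmetric] using exp1_sep[OF ex1 ex1[OF g0(1)]] by auto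
    show "Q \<inter> Q' = {}" unfolding Q_def Q'_def by auto
    show "g 0 \<in> Q" unfolding Q_def using g0 by auto
    have "norm (2 * pi * \<i>) \<ge> (1::real)" using pi_gt3 by (simp add: norm_mult)
    then show "g l \<in> Q'" unfolding Q'_def using g0 thb by auto
  qed
qed

lemma contractible_imp_connected_gen:
  fixes S :: "'a::metric_space set"
  assumes "contractible S" shows "connected S"
proof -
  have "contractible_space (top_of_set S)" using assms by simp
  then have "connected_space (top_of_set S)"
    using contractible_imp_path_connected_space path_connected_imp_connected_space by blast
  then have "connectedin euclidean S" unfolding connectedin_def by simp
  then show ?thesis by simp
qed

lemma unimodalD:
  assumes "unimodal S u"
  obtains M where "continuous_on S u" "\<forall>x \<in> S. 0 \<le> u x" "\<exists>x \<in> S. u x = M" "\<forall>x \<in> S. u x \<le> M"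
        "\<And>c. 0 < c \<Longrightarrow> c \<le> M \<Longrightarrow> contractible {x \<in> S. c \<le> u x}"
        "\<And>c. M < c \<Longrightarrow> {x \<in> S. c \<le> u x} = {}"
  using assms unfolding unimodal_def by blast

lemma edge_qc:
  assumes T: "finite_metric_tree S V E" and e: "(l, g) \<in> E" and u: "unimodal S u"
    and st: "0 \<le> s1" "s1 \<le> t" "t \<le> s2" "s2 \<le> l"
  shows "min (u (g s1)) (u (g s2)) \<le> u (g t)"
proof (rule ccontr)
  assume neg: "\<not> ?thesis"
  define c where "c = min (u (g s1)) (u (g s2))"
  note p = edge_props[OF T e] and m = edge_more[OF T e]
  obtain M where M: "continuous_on S u" "\<forall>x \<in> S. 0 \<le> u x" "\<exists>x \<in> S. u x = M" "\<forall>x \<in> S. u x \<le> M"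
        "\<And>c. 0 < c \<Longrightarrow> c \<le> M \<Longrightarrow> contractible {x \<in> S. c \<le> u x}"
        "\<And>c. M < c \<Longrightarrow> {x \<in> S. c \<le> u x} = {}"
    by (rule unimodalD[OF u]) auto
  have inS: "g \<tau> \<in> S" if "0 \<le> \<tau>" "\<tau> \<le> l" for \<tau> using p(4) that by auto
  have "u (g s1) \<le> M" using M(4) inS[of s1] st by auto
  then have "c \<le> M" unfolding c_def by (simp add: min.coboundedI1)
  moreover have "0 < c"
  proof -
    have "0 \<le> u (g t)" using M(2) inS[of t] st by auto
    then show ?thesis using neg unfolding c_def by linarith
  qed
  ultimately have "connected {x \<in> S. c \<le> u x}" using M(5)[of c] by (intro contractible_imp_connected_gen)
  moreover
  obtain Q Q' where Q: "closed Q" "closed Q'" "Q \<union> Q' = S - g ` {0<..<l}" "Q \<inter> Q' = {}"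
     "g 0 \<in> Q" "g l \<in> Q'"
    using edge_sep[OF T e] by blast
  have ne: "s1 < t" "t < s2"
  proof -
    have "s1 \<noteq> t" "t \<noteq> s2" using neg unfolding c_def by auto
    then show "s1 < t" "t < s2" using st by auto
  qed
  have "\<exists>A B. closed A \<and> closed B \<and> {x \<in> S. c \<le> u x} \<subseteq> A \<union> B \<and>
      A \<inter> B \<inter> {x \<in> S. c \<le> u x} = {} \<and> A \<inter> {x \<in> S. c \<le> u x} \<noteq> {} \<and> B \<inter> {x \<in> S. c \<le> u x} \<noteq> {}"
  proof (intro exI conjI)
    have cl: "closed (g ` {a..b})" if "0 \<le> a" "b \<le> l" for a b
      using p(2) that by (intro compact_imp_closed compact_continuous_image)
        (auto intro: continuous_on_subset)
    show "closed (Q \<union> g ` {0..t})" using Q(1) cl[of 0 t] st by auto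
    show "closed (Q' \<union> g ` {t..l})" using Q(2) cl[of t l] st by auto
    show "{x \<in> S. c \<le> u x} \<subseteq> (Q \<union> g ` {0..t}) \<union> (Q' \<union> g ` {t..l})"
    proof
      fix x assume x: "x \<in> {x \<in> S. c \<le> u x}"
      show "x \<in> (Q \<union> g ` {0..t}) \<union> (Q' \<union> g ` {t..l})"
      proof (cases "x \<in> g ` {0<..<l}")
        case True
        then obtain \<tau> where "\<tau> \<in> {0<..<l}" "x = g \<tau>" by auto
        then show ?thesis by (cases "\<tau> \<le> t") auto
      next
        case False then show ?thesis using x Q(3) by auto
      qed
    qed
    show "(Q \<union> g ` {0..t}) \<inter> (Q' \<union> g ` {t..l}) \<inter> {x \<in> S. c \<le> u x} = {}"
    proof (rule ccontr)
      assume "(Q \<union> g ` {0..t}) \<inter> (Q' \<union> g ` {t..l}) \<inter> {x \<in> S. c \<le> u x} \<noteq> {}"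
      then obtain x where x: "x \<in> Q \<union> g ` {0..t}" "x \<in> Q' \<union> g ` {t..l}" "x \<in> S" "c \<le> u x" by auto
      have Qo: "Q \<inter> g ` {0<..<l} = {}" "Q' \<inter> g ` {0<..<l} = {}" using Q(3) by auto
      show False
      proof (cases "x \<in> Q")
        case True
        then have "x \<notin> Q'" using Q(4) by auto
        then obtain \<tau> where \<tau>: "\<tau> \<in> {t..l}" "x = g \<tau>" using x by auto
        show False
        proof (cases "\<tau> = l")
          case True then show False using \<tau> Q(6) \<open>x \<notin> Q'\<close> by simp
        next
          case False
          then have "x \<in> g ` {0<..<l}" using \<tau> ne st by auto
          then show False using Qo \<open>x \<in> Q\<close> by blast
        qed
      next
        case False
        then obtain \<tau> where \<tau>: "\<tau> \<in> {0..t}" "x = g \<tau>" using x by auto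
        show False
        proof (cases "x \<in> Q'")
          case True
          show False
          proof (cases "\<tau> = 0")
            case True then show False using \<tau> Q(5) Q(4) \<open>x \<in> Q'\<close> by blast
          next
            case False
            then have "x \<in> g ` {0<..<l}" using \<tau> ne st by auto
            then show False using Qo \<open>x \<in> Q'\<close> by blast
          qed
        next
          case False
          then obtain \<sigma> where \<sigma>: "\<sigma> \<in> {t..l}" "x = g \<sigma>" using x by auto
          have "\<tau> \<in> {0..l}" "\<sigma> \<in> {0..l}" using \<tau> \<sigma> st ne by auto
          then have "\<tau> = \<sigma>" using inj_onD[OF p(3)] \<tau>(2) \<sigma>(2) by metis
          then have "\<tau> = t" using \<tau> \<sigma> by auto
          then have "x = g t" using \<tau> by auto
          then show False using x(4) neg unfolding c_def by auto
        qed
      qed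
    qed
    have "g s1 \<in> g ` {0..t}" using st ne by auto
    moreover have "g s1 \<in> S" using st ne inS[of s1] by auto
    moreover have "c \<le> u (g s1)" unfolding c_def by simp
    ultimately have "g s1 \<in> (Q \<union> g ` {0..t}) \<inter> {x \<in> S. c \<le> u x}" by blast
    then show "(Q \<union> g ` {0..t}) \<inter> {x \<in> S. c \<le> u x} \<noteq> {}" by blast
    have "g s2 \<in> g ` {t..l}" using st ne by auto
    moreover have "g s2 \<in> S" using st ne inS[of s2] by auto
    moreover have "c \<le> u (g s2)" unfolding c_def by simp
    ultimately have "g s2 \<in> (Q' \<union> g ` {t..l}) \<inter> {x \<in> S. c \<le> u x}" by blast
    then show "(Q' \<union> g ` {t..l}) \<inter> {x \<in> S. c \<le> u x} \<noteq> {}" by blast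
  qed
  ultimately show False unfolding connected_closed by (rule notE)
qed

lemma homotopic_canonI:
  fixes H :: "real \<times> 'a::topological_space \<Rightarrow> 'b::topological_space"
  assumes "continuous_on ({0..1} \<times> X) H" "H \<in> {0..1} \<times> X \<rightarrow> Y"
    "\<And>x. H (0, x) = p x" "\<And>x. H (1, x) = q x"
  shows "homotopic_with_canon (\<lambda>_. True) X Y p q"
proof -
  have e: "prod_topology (top_of_set {0..1::real}) (top_of_set X) = top_of_set ({0..1} \<times> X)"
    by (metis prod_topology_euclidean subtopology_Times)
  show ?thesis unfolding homotopic_with_def e by (intro exI[of _ H]) (use assms in auto)
qed

lemma scale_in:
  fixes a s t :: real
  assumes "0 \<le> a" "a \<le> t" "0 \<le> s" "s \<le> 1"
  shows "0 \<le> (1 - s) * a \<and> (1 - s) * a \<le> t"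
proof -
  have "0 \<le> s * a" using assms by simp
  moreover have "(1 - s) * a = a - s * a" by (simp add: algebra_simps)
  moreover have "0 \<le> (1 - s) * a" using assms by simp
  ultimately show ?thesis using assms by linarith
qed

lemma arc_attach_contractible:
  fixes K :: "'a::metric_space set" and h :: "real \<Rightarrow> 'a"
  assumes K: "closed K" and h: "continuous_on {0..t} h" "inj_on h {0..t}" "h 0 \<in> K"
    "K \<inter> h ` {0<..t} = {}" "0 \<le> t"
  shows "contractible (K \<union> h ` {0..t}) \<longleftrightarrow> contractible K"
proof -
  define A where "A = h ` {0..t}"
  define X where "X = K \<union> A"
  define hi where "hi = the_inv_into {0..t} h"
  have cA: "compact A" unfolding A_def using h(1) compact_continuous_image by blast
  then have clA: "closed A" by (rule compact_imp_closed)
  have hi_cont: "continuous_on A hi"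
    unfolding A_def hi_def using continuous_on_inv[OF h(1)] h(2) the_inv_into_f_f by (metis compact_Icc)
  have hhi: "h (hi x) = x" if "x \<in> A" for x using that h(2) unfolding A_def hi_def by (simp add: f_the_inv_into_f)
  have hiA: "hi x \<in> {0..t}" if "x \<in> A" for x using that h(2) the_inv_into_into[of h "{0..t}"] unfolding A_def hi_def by blast
  have hi0: "hi (h 0) = 0" using h(2) h(5) unfolding hi_def by (simp add: the_inv_into_f_f)
  have KA: "x = h 0" if xK: "x \<in> K" and xA: "x \<in> A" for x
  proof -
    obtain \<tau> where "\<tau> \<in> {0..t}" "x = h \<tau>" using xA A_def by auto
    then show ?thesis using xK h(4) by (cases "\<tau> = 0") auto
  qed
  define r where "r x = (if x \<in> A then h 0 else x)" for x
  have r_cont: "continuous_on X r"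
    unfolding X_def
  proof (rule continuous_on_closed_Un[OF K clA])
    show "continuous_on K r"
      by (rule continuous_on_cong[THEN iffD1, OF refl _ continuous_on_id]) (use KA in \<open>auto simp: r_def\<close>)
    show "continuous_on A r"
      by (rule continuous_on_cong[THEN iffD1, OF refl _ continuous_on_const[of _ "h 0"]]) (auto simp: r_def)
  qed
  have ret: "retraction X K r"
    unfolding retraction_def X_def using r_cont h(3) KA by (auto simp: r_def X_def)
  show ?thesis
  proof
    assume "contractible (K \<union> h ` {0..t})"
    then show "contractible K"
      using ret retract_of_contractible unfolding retract_of_def X_def A_def by blast
  next
    assume "contractible K"
    then obtain a where a: "homotopic_with_canon (\<lambda>x. True) K K id (\<lambda>x. a)"
      unfolding contractible_def by blast
    define H where "H = (\<lambda>(s::real, x). if x \<in> A then h ((1 - s) * hi x) else x)"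
    have H1: "homotopic_with_canon (\<lambda>_. True) X X id r"
    proof (rule homotopic_canonI[where H=H])
      have "continuous_on (({0..1} \<times> K) \<union> ({0..1} \<times> A)) H"
      proof (rule continuous_on_closed_Un)
        show "continuous_on ({0..1} \<times> K) H"
          by (rule continuous_on_cong[THEN iffD1, OF refl _ continuous_on_snd[OF continuous_on_id]])
            (use KA hi0 in \<open>auto simp: H_def\<close>)
        have "continuous_on ({0..1} \<times> A) (\<lambda>p. h ((1 - fst p) * hi (snd p)))"
        proof (rule continuous_on_compose2[OF h(1)])
          show "continuous_on ({0..1} \<times> A) (\<lambda>p. (1 - fst p) * hi (snd p))"
            by (intro continuous_intros continuous_on_compose2[OF hi_cont]) auto
          show "(\<lambda>p. (1 - fst p) * hi (snd p)) ` ({0..1} \<times> A) \<subseteq> {0..t}"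
          proof clarsimp
            fix s :: real and x assume "0 \<le> s" "s \<le> 1" "x \<in> A"
            then have "0 \<le> hi x" "hi x \<le> t" using hiA by auto
            then show "0 \<le> (1 - s) * hi x \<and> (1 - s) * hi x \<le> t"
              using \<open>0 \<le> s\<close> \<open>s \<le> 1\<close> scale_in by simp
          qed
        qed
        then show "continuous_on ({0..1} \<times> A) H"
          by (rule continuous_on_cong[THEN iffD1, OF refl, rotated]) (auto simp: H_def)
        show "closed ({0..1::real} \<times> K)" using K by (simp add: closed_Times)
        show "closed ({0..1::real} \<times> A)" using clA by (simp add: closed_Times)
      qed
      then show "continuous_on ({0..1} \<times> X) H" unfolding X_def by (simp add: Sigma_Un_distrib2)
      show "H \<in> {0..1} \<times> X \<rightarrow> X"
      proof clarsimp
        fix s :: real and x assume "0 \<le> s" "s \<le> 1" "x \<in> X"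
        show "H (s, x) \<in> X"
        proof (cases "x \<in> A")
          case True
          then have "0 \<le> hi x" "hi x \<le> t" using hiA by auto
          then have "(1 - s) * hi x \<in> {0..t}"
            using \<open>0 \<le> s\<close> \<open>s \<le> 1\<close> scale_in by simp
          then show ?thesis using True by (auto simp: H_def X_def A_def)
        qed (use \<open>x \<in> X\<close> in \<open>auto simp: H_def\<close>)
      qed
      show "\<And>x. H (0, x) = id x" by (auto simp: H_def hhi)
      show "\<And>x. H (1, x) = r x" by (auto simp: H_def r_def)
    qed
    have "homotopic_with_canon (\<lambda>_. True) X K (id \<circ> r) ((\<lambda>x. a) \<circ> r)"
      by (rule homotopic_with_compose_continuous_right[OF _ r_cont])
        (use a ret in \<open>auto simp: retraction_def\<close>)
    then have "homotopic_with_canon (\<lambda>_. True) X X r (\<lambda>x. a)"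
    proof -
      have "K \<subseteq> X" unfolding X_def by auto
      from homotopic_with_subset_right[OF \<open>homotopic_with_canon (\<lambda>_. True) X K (id \<circ> r) ((\<lambda>x. a) \<circ> r)\<close> this]
      show ?thesis by (simp add: o_def)
    qed
    then have "homotopic_with_canon (\<lambda>_. True) X X id (\<lambda>x. a)"
      using H1 homotopic_with_trans by blast
    then show "contractible (K \<union> h ` {0..t})" unfolding contractible_def X_def A_def by blast
  qed
qed

definition qc :: "real \<Rightarrow> (real \<Rightarrow> real) \<Rightarrow> bool" where
  "qc l F \<longleftrightarrow> (\<forall>s1 t s2. 0 \<le> s1 \<longrightarrow> s1 \<le> t \<longrightarrow> t \<le> s2 \<longrightarrow> s2 \<le> l \<longrightarrow> min (F s1) (F s2) \<le> F t)"

lemma qcD: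
  assumes "qc l F" "0 \<le> s1" "s1 \<le> t" "t \<le> s2" "s2 \<le> l"
  shows "min (F s1) (F s2) \<le> F t"
  using assms unfolding qc_def by blast

lemma qc_rev:
  assumes "qc l F" shows "qc l (\<lambda>\<tau>. F (l - \<tau>))"
  unfolding qc_def
proof (intro allI impI)
  fix s1 t s2 :: real assume "0 \<le> s1" "s1 \<le> t" "t \<le> s2" "s2 \<le> l"
  have "min (F (l - s2)) (F (l - s1)) \<le> F (l - t)"
    by (rule qcD[OF assms]) (use \<open>0 \<le> s1\<close> \<open>s1 \<le> t\<close> \<open>t \<le> s2\<close> \<open>s2 \<le> l\<close> in linarith)+
  then show "min (F (l - s1)) (F (l - s2)) \<le> F (l - t)" by (simp add: min.commute)
qed

lemma affine_qc: "qc l (\<lambda>\<tau>. A + B * \<tau>)"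
  unfolding qc_def
proof (intro allI impI)
  fix s1 t s2 :: real assume "0 \<le> s1" "s1 \<le> t" "t \<le> s2" "s2 \<le> l"
  show "min (A + B * s1) (A + B * s2) \<le> A + B * t"
  proof (cases "0 \<le> B")
    case True
    then have "B * s1 \<le> B * t" using \<open>s1 \<le> t\<close> by (simp add: mult_left_mono)
    then show ?thesis by simp
  next
    case False
    then have "B * s2 \<le> B * t" using \<open>t \<le> s2\<close> by (simp add: mult_left_mono_neg)
    then show ?thesis by simp
  qed
qed

lemma conv_bounds:
  fixes A B lam :: real
  assumes "0 \<le> lam" "lam \<le> 1"
  shows "min A B \<le> A + (B - A) * lam" "A + (B - A) * lam \<le> max A B"
proof -
  have "(B - A) * lam \<le> max 0 (B - A)"
  proof (cases "0 \<le> B - A")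
    case True
    have "(B - A) * lam \<le> (B - A) * 1" using True assms by (intro mult_left_mono) auto
    then show ?thesis by simp
  next
    case False
    then show ?thesis using assms by (simp add: mult_nonpos_nonneg)
  qed
  moreover have "min 0 (B - A) \<le> (B - A) * lam"
  proof (cases "0 \<le> B - A")
    case True
    then show ?thesis using assms by simp
  next
    case False
    have "(B - A) * 1 \<le> (B - A) * lam" using False assms by (intro mult_left_mono_neg) auto
    then show ?thesis by simp
  qed
  ultimately have "(B - A) * lam \<le> max 0 (B - A)" "min 0 (B - A) \<le> (B - A) * lam" by auto
  then show "min A B \<le> A + (B - A) * lam" "A + (B - A) * lam \<le> max A B" by auto
qed

lemma level_interval:
  fixes h :: "real \<Rightarrow> 'a::metric_space" and w :: "'a \<Rightarrow> real"
  assumes cont: "continuous_on {0..l} (\<lambda>\<tau>. w (h \<tau>))" and q: "qc l (\<lambda>\<tau>. w (h \<tau>))"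
    and c0: "c \<le> w (h 0)" and cl: "w (h l) < c" and l: "0 \<le> l"
  obtains t1 where "0 \<le> t1" "t1 < l" "{\<tau> \<in> {0..l}. c \<le> w (h \<tau>)} = {0..t1}"
proof -
  define J where "J = {\<tau> \<in> {0..l}. c \<le> w (h \<tau>)}"
  have "closed ({0..l} \<inter> (\<lambda>\<tau>. w (h \<tau>)) -` {c..})"
    by (rule continuous_closed_preimage[OF cont]) auto
  moreover have "J = {0..l} \<inter> (\<lambda>\<tau>. w (h \<tau>)) -` {c..}" unfolding J_def by auto
  ultimately have "closed J" by simp
  moreover have "bounded J"
    by (rule bounded_subset[OF compact_imp_bounded[OF compact_Icc[of 0 l]]]) (auto simp: J_def)
  ultimately have "compact J" using compact_eq_bounded_closed by blast
  moreover have "0 \<in> J" using c0 l unfolding J_def by auto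
  ultimately obtain t1 where t1: "t1 \<in> J" "\<And>\<tau>. \<tau> \<in> J \<Longrightarrow> \<tau> \<le> t1"
    using compact_attains_sup[of J] by blast
  have "J = {0..t1}"
  proof
    show "J \<subseteq> {0..t1}" using t1 unfolding J_def by auto
    show "{0..t1} \<subseteq> J"
    proof
      fix \<tau> assume \<tau>: "\<tau> \<in> {0..t1}"
      have "t1 \<le> l" using t1 unfolding J_def by auto
      then have "min (w (h 0)) (w (h t1)) \<le> w (h \<tau>)"
        by (rule qcD[OF q, rotated 3]) (use \<tau> in auto)
      moreover have "c \<le> w (h t1)" using t1 unfolding J_def by auto
      ultimately show "\<tau> \<in> J" using c0 \<tau> \<open>t1 \<le> l\<close> unfolding J_def by auto
    qed
  qed
  moreover have "t1 \<noteq> l" using t1 cl unfolding J_def by auto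
  moreover have "t1 \<le> l" "0 \<le> t1" using t1 unfolding J_def by auto
  ultimately have "0 \<le> t1" "t1 < l" "{\<tau> \<in> {0..l}. c \<le> w (h \<tau>)} = {0..t1}"
    unfolding J_def by auto
  then show ?thesis by (rule that)
qed

lemma GL:
  fixes K :: "'a::metric_space set" and h :: "real \<Rightarrow> 'a" and w :: "'a \<Rightarrow> real"
  assumes K: "closed K" and h: "continuous_on {0..l} h" "inj_on h {0..l}" "h 0 \<in> K"
    "K \<inter> h ` {0<..l} = {}" "0 \<le> l"
    and cont: "continuous_on {0..l} (\<lambda>\<tau>. w (h \<tau>))" and q: "qc l (\<lambda>\<tau>. w (h \<tau>))"
    and c0: "c \<le> w (h 0)" and cl: "w (h l) < c"
  shows "contractible (K \<union> {x \<in> h ` {0..l}. c \<le> w x}) \<longleftrightarrow> contractible K"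
proof -
  obtain t1 where t1: "0 \<le> t1" "t1 < l" "{\<tau> \<in> {0..l}. c \<le> w (h \<tau>)} = {0..t1}"
    using level_interval[where h=h and w=w, OF cont q c0 cl h(5)] by blast
  have "{x \<in> h ` {0..l}. c \<le> w x} = h ` {\<tau> \<in> {0..l}. c \<le> w (h \<tau>)}" by auto
  then have e: "{x \<in> h ` {0..l}. c \<le> w x} = h ` {0..t1}" using t1 by simp
  show ?thesis unfolding e
  proof (rule arc_attach_contractible[OF K])
    show "continuous_on {0..t1} h" using h(1) t1 by (auto intro: continuous_on_subset)
    show "inj_on h {0..t1}" using h(2) t1 by (auto intro: inj_on_subset)
    show "K \<inter> h ` {0<..t1} = {}" using h(4) t1 by auto
  qed (use h t1 in auto)
qed

definition interp :: "real \<Rightarrow> (real \<Rightarrow> 'a) \<Rightarrow> ('a \<Rightarrow> real) \<Rightarrow> 'a \<Rightarrow> real" where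
  "interp l g u x = (if x \<in> g ` {0<..<l}
     then u (g 0) + (u (g l) - u (g 0)) * (the_inv_into {0..l} g x / l) else u x)"

lemma interp_off: "x \<notin> g ` {0<..<l} \<Longrightarrow> interp l g u x = u x"
  by (simp add: interp_def)

lemma interp_on_edge:
  assumes T: "finite_metric_tree S V E" and e: "(l, g) \<in> E" and \<tau>: "\<tau> \<in> {0..l}"
  shows "interp l g u (g \<tau>) = u (g 0) + (u (g l) - u (g 0)) * (\<tau> / l)"
proof -
  note p = edge_props[OF T e] and m = edge_more[OF T e]
  show ?thesis
  proof (cases "\<tau> = 0 \<or> \<tau> = l")
    case True
    then show ?thesis
    proof
      assume "\<tau> = 0" then show ?thesis using m(7) by (simp add: interp_def)
    next
      assume "\<tau> = l" then show ?thesis using m(8) p(1) by (simp add: interp_def)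
    qed
  next
    case False
    then have "g \<tau> \<in> g ` {0<..<l}" using \<tau> by auto
    then show ?thesis using m(6)[OF \<tau>] by (simp add: interp_def)
  qed
qed

lemma interp_ce:
  assumes T: "finite_metric_tree S V E" and e: "(l, g) \<in> E" and x: "x \<in> g ` {0..l}"
  shows "interp l g u x = u (g 0) + (u (g l) - u (g 0)) * (the_inv_into {0..l} g x / l)"
proof -
  note m = edge_more[OF T e]
  obtain \<tau> where "\<tau> \<in> {0..l}" "x = g \<tau>" using x by auto
  then show ?thesis using interp_on_edge[OF T e] m(6) by simp
qed

lemma interp_cont:
  assumes T: "finite_metric_tree S V E" and e: "(l, g) \<in> E" and u: "continuous_on S u"
  shows "continuous_on S (interp l g u)"
proof -
  note p = edge_props[OF T e] and m = edge_more[OF T e]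
  have SU: "S = g ` {0..l} \<union> (S - g ` {0<..<l})" using p(4) m(10) by auto
  have "continuous_on (g ` {0..l} \<union> (S - g ` {0<..<l})) (interp l g u)"
  proof (rule continuous_on_closed_Un[OF m(2) closed_compl_edge[OF T e]])
    show "continuous_on (g ` {0..l}) (interp l g u)"
    proof (rule continuous_on_cong[THEN iffD1, OF refl _ ])
      show "continuous_on (g ` {0..l})
          (\<lambda>x. u (g 0) + (u (g l) - u (g 0)) * (the_inv_into {0..l} g x / l))"
        using m(3) p(1) by (intro continuous_intros) auto
    qed (use interp_ce[OF T e] in auto)
    show "continuous_on (S - g ` {0<..<l}) (interp l g u)"
      by (rule continuous_on_cong[THEN iffD1, OF refl _ continuous_on_subset[OF u]])
        (auto simp: interp_off)
  qed
  then show ?thesis using SU by simp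
qed

lemma interp_unimodal:
  assumes T: "finite_metric_tree S V E" and e: "(l, g) \<in> E" and u: "unimodal S u"
  shows "unimodal S (interp l g u)"
proof -
  note p = edge_props[OF T e] and m = edge_more[OF T e]
  define v where "v = interp l g u"
  define oe where "oe = g ` {0<..<l}"
  define a where "a = g 0"
  define b where "b = g l"
  obtain M where M: "continuous_on S u" "\<forall>x \<in> S. 0 \<le> u x" "\<exists>x \<in> S. u x = M" "\<forall>x \<in> S. u x \<le> M"
        "\<And>c. 0 < c \<Longrightarrow> c \<le> M \<Longrightarrow> contractible {x \<in> S. c \<le> u x}"
        "\<And>c. M < c \<Longrightarrow> {x \<in> S. c \<le> u x} = {}"
    by (rule unimodalD[OF u]) auto
  have clc: "closed (S - oe)" using closed_compl_edge[OF T e] oe_def by simp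
  have cpc: "compact (S - oe)" using compact_Int_closed[OF p(9) clc] by (simp add: Int_absorb1 Diff_subset)
  have aS: "a \<in> S - oe" "b \<in> S - oe" using p m oe_def a_def b_def by auto
  obtain x0 where x0: "x0 \<in> S - oe" "\<And>y. y \<in> S - oe \<Longrightarrow> u y \<le> u x0"
    using continuous_attains_sup[OF cpc _ continuous_on_subset[OF M(1)]] aS by blast
  have ve: "v (g \<tau>) = u a + (u b - u a) * (\<tau> / l)" if "\<tau> \<in> {0..l}" for \<tau>
    using interp_on_edge[OF T e that] unfolding v_def a_def b_def .
  have voff: "v x = u x" if "x \<notin> oe" for x using interp_off that unfolding v_def oe_def by metis
  have lam: "0 \<le> \<tau> / l" "\<tau> / l \<le> 1" if "\<tau> \<in> {0..l}" for \<tau> using that p(1) by auto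
  have vcont: "continuous_on S v" unfolding v_def by (rule interp_cont[OF T e M(1)])
  have ceS: "g ` {0..l} \<subseteq> S" using p(4) .
  have vle: "v x \<le> u x0" if "x \<in> S" for x
  proof (cases "x \<in> oe")
    case True
    then obtain \<tau> where \<tau>0: "\<tau> \<in> {0<..<l}" "x = g \<tau>" unfolding oe_def by blast
    then have \<tau>: "\<tau> \<in> {0..l}" "x = g \<tau>" by auto
    have "v x \<le> max (u a) (u b)" using ve[OF \<tau>(1)] conv_bounds(2)[OF lam[OF \<tau>(1)]] \<tau>(2) by simp
    also have "\<dots> \<le> u x0" using x0(2) aS by auto
    finally show ?thesis .
  next
    case False then show ?thesis using voff x0 that by auto
  qed
  have v0: "0 \<le> v x" if "x \<in> S" for x
  proof (cases "x \<in> oe")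
    case True
    then obtain \<tau> where \<tau>0: "\<tau> \<in> {0<..<l}" "x = g \<tau>" unfolding oe_def by blast
    then have \<tau>: "\<tau> \<in> {0..l}" "x = g \<tau>" by auto
    have "min (u a) (u b) \<le> v x" using ve[OF \<tau>(1)] conv_bounds(1)[OF lam[OF \<tau>(1)]] \<tau>(2) by simp
    moreover have "0 \<le> u a" "0 \<le> u b" using M(2) aS by auto
    ultimately show ?thesis by linarith
  next
    case False then show ?thesis using voff M(2) that by auto
  qed
  have vx0: "v x0 = u x0" using voff x0(1) by auto
  have M'M: "u x0 \<le> M" using M(4) x0(1) by auto
  have contr: "contractible {x \<in> S. c \<le> v x}" if c: "0 < c" "c \<le> u x0" for c
  proof -
    define K where "K = {x \<in> S - oe. c \<le> u x}"
    have clK: "closed K"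
    proof -
      have "closed ((S - oe) \<inter> u -` {c..})"
        by (rule continuous_closed_preimage[OF continuous_on_subset[OF M(1)] clc]) auto
      moreover have "K = (S - oe) \<inter> u -` {c..}" unfolding K_def by auto
      ultimately show ?thesis by simp
    qed
    have x0K: "x0 \<in> K" using x0 c unfolding K_def by auto
    have SU: "S = g ` {0..l} \<union> (S - oe)" using ceS m(10) oe_def by auto
    have oece: "oe \<subseteq> g ` {0..l}" using m(10) oe_def by simp
    have Leq: "{x \<in> S. c \<le> u x} = K \<union> {x \<in> g ` {0..l}. c \<le> u x}"
      using oece ceS unfolding K_def by blast
    have Neq: "{x \<in> S. c \<le> v x} = K \<union> {x \<in> g ` {0..l}. c \<le> v x}"
    proof -
      have "{x \<in> S. c \<le> v x} = {x \<in> S - oe. c \<le> v x} \<union> {x \<in> g ` {0..l}. c \<le> v x}"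
        using oece ceS by blast
      moreover have "{x \<in> S - oe. c \<le> v x} = K" unfolding K_def using voff by auto
      ultimately show ?thesis by simp
    qed
    have Lc: "contractible {x \<in> S. c \<le> u x}" using M(5) c M'M by auto
    have ucont: "continuous_on {0..l} (\<lambda>\<tau>. u (g \<tau>))"
      by (rule continuous_on_compose2[OF M(1) p(2) ceS])
    have vcont': "continuous_on {0..l} (\<lambda>\<tau>. v (g \<tau>))"
      by (rule continuous_on_compose2[OF vcont p(2) ceS])
    have uqc: "qc l (\<lambda>\<tau>. u (g \<tau>))"
      unfolding qc_def by (intro allI impI, rule edge_qc[OF T e u]) assumption+
    have vqc: "qc l (\<lambda>\<tau>. v (g \<tau>))"
      unfolding qc_def
    proof (intro allI impI)
      fix s1 t s2 :: real assume st: "0 \<le> s1" "s1 \<le> t" "t \<le> s2" "s2 \<le> l"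
      have "min (u a + ((u b - u a) / l) * s1) (u a + ((u b - u a) / l) * s2) \<le> u a + ((u b - u a) / l) * t"
        by (rule qcD[OF affine_qc st])
      moreover have "v (g \<tau>) = u a + ((u b - u a) / l) * \<tau>" if "\<tau> \<in> {0..l}" for \<tau>
        using ve[OF that] by simp
      moreover have "s1 \<in> {0..l}" "t \<in> {0..l}" "s2 \<in> {0..l}" using st by auto
      ultimately show "min (v (g s1)) (v (g s2)) \<le> v (g t)" by simp
    qed
    consider (both) "c \<le> u a" "c \<le> u b" | (left) "c \<le> u a" "u b < c" | (right) "u a < c" "c \<le> u b"
      | (none) "u a < c" "u b < c" by linarith
    then show ?thesis
    proof cases
      case both
      have "{x \<in> g ` {0..l}. c \<le> u x} = g ` {0..l}"
      proof -
        have "c \<le> u (g \<tau>)" if "\<tau> \<in> {0..l}" for \<tau>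
        proof -
          have "min (u a) (u b) \<le> u (g \<tau>)" unfolding a_def b_def
            by (rule qcD[OF uqc]) (use that in auto)
          then show ?thesis using both by linarith
        qed
        then show ?thesis by auto
      qed
      moreover have "{x \<in> g ` {0..l}. c \<le> v x} = g ` {0..l}"
      proof -
        have "c \<le> v (g \<tau>)" if "\<tau> \<in> {0..l}" for \<tau>
        proof -
          have "min (u a) (u b) \<le> u a + (u b - u a) * (\<tau> / l)" by (rule conv_bounds(1)[OF lam[OF that]])
          then show ?thesis using ve[OF that] both by linarith
        qed
        then show ?thesis by auto
      qed
      ultimately show ?thesis using Lc Leq Neq by simp
    next
      case left
      have Kd: "K \<inter> g ` {0<..l} = {}"
      proof -
        have "g ` {0<..l} \<subseteq> oe \<union> {b}" unfolding oe_def b_def by (auto simp: le_less)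
        then show ?thesis using left unfolding K_def by auto
      qed
      have aK: "g 0 \<in> K" using left aS unfolding K_def a_def by auto
      have vb: "v (g l) < c" using voff aS left unfolding b_def by auto
      have "contractible {x \<in> S. c \<le> u x} \<longleftrightarrow> contractible K"
        unfolding Leq by (rule GL[OF clK p(2) p(3) aK Kd _ ucont uqc]) (use left p(1) in \<open>auto simp: a_def b_def\<close>)
      moreover have "contractible {x \<in> S. c \<le> v x} \<longleftrightarrow> contractible K"
        unfolding Neq by (rule GL[OF clK p(2) p(3) aK Kd _ vcont' vqc]) (use left p(1) voff aS vb in \<open>auto simp: a_def b_def\<close>)
      ultimately show ?thesis using Lc by simp
    next
      case right
      define h where "h = (\<lambda>\<tau>. g (l - \<tau>))"
      have himg: "h ` {0..l} = g ` {0..l}"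
      proof
        show "h ` {0..l} \<subseteq> g ` {0..l}" unfolding h_def by auto
        show "g ` {0..l} \<subseteq> h ` {0..l}"
        proof
          fix x assume "x \<in> g ` {0..l}"
          then obtain \<tau> where "\<tau> \<in> {0..l}" "x = g \<tau>" by auto
          then have "l - \<tau> \<in> {0..l}" "x = h (l - \<tau>)" unfolding h_def by auto
          then show "x \<in> h ` {0..l}" by blast
        qed
      qed
      have hcont: "continuous_on {0..l} h" unfolding h_def
        by (rule continuous_on_compose2[OF p(2)]) (auto intro!: continuous_intros)
      have hinj: "inj_on h {0..l}" unfolding h_def inj_on_def
      proof clarify
        fix x y :: real assume "x \<in> {0..l}" "y \<in> {0..l}" "g (l - x) = g (l - y)"
        then have "l - x = l - y" using inj_onD[OF p(3)] by auto
        then show "x = y" by simp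
      qed
      have Kd: "K \<inter> h ` {0<..l} = {}"
      proof -
        have "h ` {0<..l} \<subseteq> oe \<union> {a}"
        proof
          fix x assume "x \<in> h ` {0<..l}"
          then obtain \<tau> where "\<tau> \<in> {0<..l}" "x = g (l - \<tau>)" unfolding h_def by auto
          then show "x \<in> oe \<union> {a}" unfolding oe_def a_def by (cases "\<tau> = l") auto
        qed
        then show ?thesis using right unfolding K_def by auto
      qed
      have bK: "h 0 \<in> K" using right aS unfolding K_def b_def h_def by auto
      have hl: "h l = a" "h 0 = b" unfolding h_def a_def b_def by auto
      have uqc': "qc l (\<lambda>\<tau>. u (h \<tau>))" unfolding h_def by (rule qc_rev[OF uqc])
      have vqc': "qc l (\<lambda>\<tau>. v (h \<tau>))" unfolding h_def by (rule qc_rev[OF vqc])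
      have ucont': "continuous_on {0..l} (\<lambda>\<tau>. u (h \<tau>))"
        by (rule continuous_on_compose2[OF M(1) hcont]) (use himg ceS in auto)
      have vcont'': "continuous_on {0..l} (\<lambda>\<tau>. v (h \<tau>))"
        by (rule continuous_on_compose2[OF vcont hcont]) (use himg ceS in auto)
      have va: "v a < c" "c \<le> v b" using voff aS right by auto
      have "contractible {x \<in> S. c \<le> u x} \<longleftrightarrow> contractible K"
        unfolding Leq himg[symmetric]
        by (rule GL[OF clK hcont hinj bK Kd _ ucont' uqc']) (use right p(1) hl in auto)
      moreover have "contractible {x \<in> S. c \<le> v x} \<longleftrightarrow> contractible K"
        unfolding Neq himg[symmetric]
        by (rule GL[OF clK hcont hinj bK Kd _ vcont'' vqc']) (use va p(1) hl in auto)
      ultimately show ?thesis using Lc by simp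
    next
      case none
      have "{x \<in> g ` {0..l}. c \<le> v x} = {}"
      proof (intro equals0I)
        fix x assume "x \<in> {x \<in> g ` {0..l}. c \<le> v x}"
        then obtain \<tau> where \<tau>: "\<tau> \<in> {0..l}" "x = g \<tau>" "c \<le> v x" by auto
        have "u a + (u b - u a) * (\<tau> / l) \<le> max (u a) (u b)" by (rule conv_bounds(2)[OF lam[OF \<tau>(1)]])
        then show False using ve[OF \<tau>(1)] \<tau> none by auto
      qed
      then have N: "{x \<in> S. c \<le> v x} = K" unfolding Neq by (simp only: Un_empty_right)
      have "{x \<in> S. c \<le> u x} \<subseteq> K"
      proof
        fix y assume y: "y \<in> {x \<in> S. c \<le> u x}"
        show "y \<in> K"
        proof (rule ccontr)
          assume "y \<notin> K"
          then have yoe: "y \<in> oe" using y unfolding K_def by auto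
          define J where "J = {\<tau> \<in> {0..l}. c \<le> u (g \<tau>)}"
          have "closed ({0..l} \<inter> (\<lambda>\<tau>. u (g \<tau>)) -` {c..})"
            by (rule continuous_closed_preimage[OF ucont]) auto
          moreover have "J = {0..l} \<inter> (\<lambda>\<tau>. u (g \<tau>)) -` {c..}" unfolding J_def by auto
          ultimately have "closed J" by simp
          moreover have "bounded J"
            by (rule bounded_subset[OF compact_imp_bounded[OF compact_Icc[of 0 l]]]) (auto simp: J_def)
          ultimately have "compact J" using compact_eq_bounded_closed by blast
          moreover have "continuous_on J g" using p(2) by (rule continuous_on_subset) (auto simp: J_def)
          ultimately have clJ: "closed (g ` J)" by (intro compact_imp_closed compact_continuous_image)
          have conn: "connected {x \<in> S. c \<le> u x}" using Lc by (rule contractible_imp_connected_gen)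
          have "\<exists>A B. closed A \<and> closed B \<and> {x \<in> S. c \<le> u x} \<subseteq> A \<union> B \<and>
            A \<inter> B \<inter> {x \<in> S. c \<le> u x} = {} \<and> A \<inter> {x \<in> S. c \<le> u x} \<noteq> {} \<and> B \<inter> {x \<in> S. c \<le> u x} \<noteq> {}"
          proof (intro exI conjI)
            show "closed (g ` J)" by (rule clJ)
            show "closed (S - oe)" by (rule clc)
            show "{x \<in> S. c \<le> u x} \<subseteq> g ` J \<union> (S - oe)"
            proof
              fix x assume x: "x \<in> {x \<in> S. c \<le> u x}"
              show "x \<in> g ` J \<union> (S - oe)"
              proof (cases "x \<in> oe")
                case True
                then obtain \<tau> where "\<tau> \<in> {0<..<l}" "x = g \<tau>" unfolding oe_def by blast
                then have "\<tau> \<in> J" "x = g \<tau>" using x unfolding J_def by auto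
                then show ?thesis by blast
              qed (use x in auto)
            qed
            show "g ` J \<inter> (S - oe) \<inter> {x \<in> S. c \<le> u x} = {}"
            proof (intro equals0I)
              fix x assume x: "x \<in> g ` J \<inter> (S - oe) \<inter> {x \<in> S. c \<le> u x}"
              then obtain \<tau> where \<tau>: "\<tau> \<in> J" "x = g \<tau>" "x \<notin> oe" by auto
              have "\<tau> = 0 \<or> \<tau> = l"
              proof (rule ccontr)
                assume "\<not> (\<tau> = 0 \<or> \<tau> = l)"
                then have "\<tau> \<in> {0<..<l}" using \<tau>(1) unfolding J_def by auto
                then show False using \<tau> unfolding oe_def by blast
              qed
              then show False using \<tau>(1) none unfolding J_def a_def b_def by auto
            qed
            show "g ` J \<inter> {x \<in> S. c \<le> u x} \<noteq> {}"
            proof -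
              obtain \<tau> where "\<tau> \<in> {0<..<l}" "y = g \<tau>" using yoe unfolding oe_def by blast
              then have "\<tau> \<in> J" using y unfolding J_def by auto
              then have "y \<in> g ` J \<inter> {x \<in> S. c \<le> u x}" using y \<open>y = g \<tau>\<close> by blast
              then show ?thesis by blast
            qed
            show "(S - oe) \<inter> {x \<in> S. c \<le> u x} \<noteq> {}"
            proof -
              have "x0 \<in> (S - oe) \<inter> {x \<in> S. c \<le> u x}" using x0K unfolding K_def by auto
              then show ?thesis by blast
            qed
          qed
          then show False using conn unfolding connected_closed by blast
        qed
      qed
      then have "{x \<in> S. c \<le> u x} = K" unfolding K_def by auto
      then show ?thesis using Lc N by simp
    qed
  qed
  show ?thesis
    unfolding unimodal_def v_def[symmetric]
  proof (intro conjI exI[of _ "u x0"])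
    show "continuous_on S v" by (rule vcont)
    show "\<forall>x\<in>S. 0 \<le> v x" using v0 by auto
    show "\<exists>x\<in>S. v x = u x0" using vx0 x0 by auto
    show "\<forall>x\<in>S. v x \<le> u x0" using vle by auto
    show "\<forall>c. 0 < c \<and> c \<le> u x0 \<longrightarrow> contractible {x \<in> S. c \<le> v x}" using contr by auto
    show "\<forall>c. u x0 < c \<longrightarrow> {x \<in> S. c \<le> v x} = {}"
    proof (intro allI impI equals0I)
      fix c x assume "u x0 < c" "x \<in> {x \<in> S. c \<le> v x}"
      then show False using vle[of x] by auto
    qed
  qed
qed

lemma other_edge_disjoint:
  assumes T: "finite_metric_tree S V E" and e: "(l, g) \<in> E" and e': "(l', g') \<in> E"
    and ne: "(l', g') \<noteq> (l, g)" and \<tau>: "\<tau> \<in> {0..l'}"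
  shows "g' \<tau> \<notin> g ` {0<..<l}"
proof -
  have "g' \<tau> \<in> (\<lambda>(l', g'). g' ` {0..l'}) (l', g')" using \<tau> by auto
  then have "g' \<tau> \<in> V \<union> (\<Union>(l', g') \<in> E - {(l, g)}. g' ` {0..l'})" using e' ne by blast
  then show ?thesis using compl_edge_eq[OF T e] by blast
qed

lemma sum_affine:
  fixes a b :: "nat \<Rightarrow> real"
  shows "(\<Sum>i\<in>I. a i + (b i - a i) * r) = (\<Sum>i\<in>I. a i) + ((\<Sum>i\<in>I. b i) - (\<Sum>i\<in>I. a i)) * r"
  by (simp add: sum.distrib sum_subtractf sum_distrib_right left_diff_distrib)

lemma main_ind:
  assumes T: "finite_metric_tree S V E" and fl: "edge_linear E f"
    and ud: "unimodal_decomposition S f n us" and F: "finite F" "F \<subseteq> E"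
  shows "\<exists>vs. unimodal_decomposition S f n vs \<and>
     (\<forall>i<n. \<forall>(l, g)\<in>F. \<exists>\<alpha> \<beta>. \<forall>\<tau>\<in>{0..l}. vs i (g \<tau>) = \<alpha> * \<tau> + \<beta>)"
  using F
proof (induction F rule: finite_induct)
  case empty
  then show ?case using ud by auto
next
  case (insert e F)
  then obtain vs where vs: "unimodal_decomposition S f n vs"
     "\<forall>i<n. \<forall>(l, g)\<in>F. \<exists>\<alpha> \<beta>. \<forall>\<tau>\<in>{0..l}. vs i (g \<tau>) = \<alpha> * \<tau> + \<beta>" by auto
  obtain l g where lg: "e = (l, g)" by fastforce
  have eE: "(l, g) \<in> E" using insert lg by auto
  note p = edge_props[OF T eE] and m = edge_more[OF T eE]
  define vs' where "vs' i = interp l g (vs i)" for i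
  have un: "\<forall>i<n. unimodal S (vs i)" and sm: "\<forall>x\<in>S. f x = (\<Sum>i<n. vs i x)"
    using vs(1) unfolding unimodal_decomposition_def by auto
  have ve: "vs' i (g \<tau>) = vs i (g 0) + (vs i (g l) - vs i (g 0)) * (\<tau> / l)" if "\<tau> \<in> {0..l}" for i \<tau>
    unfolding vs'_def by (rule interp_on_edge[OF T eE that])
  obtain A B where AB: "\<forall>\<tau>\<in>{0..l}. f (g \<tau>) = A * \<tau> + B"
    using fl eE unfolding edge_linear_def by blast
  have g0S: "g 0 \<in> S" "g l \<in> S" using p by auto
  have "unimodal_decomposition S f n vs'"
    unfolding unimodal_decomposition_def
  proof (intro conjI allI impI ballI)
    show "unimodal S (vs' i)" if "i < n" for i
      unfolding vs'_def using interp_unimodal[OF T eE] un that by blast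
    fix x assume x: "x \<in> S"
    show "f x = (\<Sum>i<n. vs' i x)"
    proof (cases "x \<in> g ` {0<..<l}")
      case True
      then obtain \<tau> where \<tau>0: "\<tau> \<in> {0<..<l}" "x = g \<tau>" by blast
      then have \<tau>: "\<tau> \<in> {0..l}" by auto
      have "(\<Sum>i<n. vs' i x) = (\<Sum>i<n. vs i (g 0) + (vs i (g l) - vs i (g 0)) * (\<tau> / l))"
        using ve[OF \<tau>] \<tau>0 by simp
      also have "\<dots> = (\<Sum>i<n. vs i (g 0)) + ((\<Sum>i<n. vs i (g l)) - (\<Sum>i<n. vs i (g 0))) * (\<tau> / l)"
        by (rule sum_affine)
      also have "\<dots> = f (g 0) + (f (g l) - f (g 0)) * (\<tau> / l)" using sm g0S by simp
      also have "\<dots> = B + (A * l) * (\<tau> / l)" using AB p(1) by simp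
      also have "\<dots> = A * \<tau> + B" using p(1) by simp
      also have "\<dots> = f x" using AB \<tau> \<tau>0 by simp
      finally show ?thesis by simp
    next
      case False
      then show ?thesis using sm x by (simp add: vs'_def interp_off)
    qed
  qed
  moreover have "\<forall>i<n. \<forall>(l', g')\<in>insert e F. \<exists>\<alpha> \<beta>. \<forall>\<tau>\<in>{0..l'}. vs' i (g' \<tau>) = \<alpha> * \<tau> + \<beta>"
  proof (intro allI impI ballI)
    fix i and e' assume i: "i < n" and e': "e' \<in> insert e F"
    obtain l' g' where lg': "e' = (l', g')" by fastforce
    show "case e' of (l', g') \<Rightarrow> \<exists>\<alpha> \<beta>. \<forall>\<tau>\<in>{0..l'}. vs' i (g' \<tau>) = \<alpha> * \<tau> + \<beta>"
    proof (cases "e' = e")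
      case True
      have "\<forall>\<tau>\<in>{0..l}. vs' i (g \<tau>) = ((vs i (g l) - vs i (g 0)) / l) * \<tau> + vs i (g 0)"
        using ve by simp
      then have "\<exists>\<alpha> \<beta>. \<forall>\<tau>\<in>{0..l}. vs' i (g \<tau>) = \<alpha> * \<tau> + \<beta>" by blast
      then show ?thesis using True lg lg' by auto
    next
      case False
      then have e'F: "(l', g') \<in> F" using e' lg' by auto
      then obtain \<alpha> \<beta> where ab: "\<forall>\<tau>\<in>{0..l'}. vs i (g' \<tau>) = \<alpha> * \<tau> + \<beta>" using vs(2) i by fastforce
      have e'E: "(l', g') \<in> E" using e'F insert by auto
      have ne: "(l', g') \<noteq> (l, g)" using False lg lg' by auto
      have "\<forall>\<tau>\<in>{0..l'}. vs' i (g' \<tau>) = \<alpha> * \<tau> + \<beta>"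
        using ab other_edge_disjoint[OF T eE e'E ne] by (simp add: vs'_def interp_off)
      then show ?thesis using lg' by auto
    qed
  qed
  ultimately show ?case by blast
qed

lemma affine_le_max:
  fixes \<alpha> \<beta> \<tau> l :: real
  assumes "0 \<le> \<tau>" "\<tau> \<le> l"
  shows "\<alpha> * \<tau> + \<beta> \<le> max (\<alpha> * 0 + \<beta>) (\<alpha> * l + \<beta>)"
proof (cases "0 \<le> \<alpha>")
  case True
  then have "\<alpha> * \<tau> \<le> \<alpha> * l" using assms by (simp add: mult_left_mono)
  then show ?thesis by simp
next
  case False
  then have "\<alpha> * \<tau> \<le> 0" using assms by (simp add: mult_nonpos_nonneg)
  then show ?thesis by simp
qed

theorem lemma2p3:
  fixes S :: "'a::metric_space set" and V :: "'a set"
    and E :: "(real \<times> (real \<Rightarrow> 'a)) set"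
    and f :: "'a \<Rightarrow> real" and n :: nat and us :: "nat \<Rightarrow> 'a \<Rightarrow> real"
  assumes "finite_metric_tree S V E"
    and "continuous_on S f" and "\<forall>x \<in> S. 0 \<le> f x"
    and "edge_linear E f"
    and "unimodal_decomposition S f n us"
  shows "\<exists>vs. unimodal_decomposition S f n vs \<and>
           (\<forall>i < n. \<exists>v \<in> V. \<forall>x \<in> S. vs i x \<le> vs i v)"
proof -
  note T = assms(1)
  obtain vs where vs: "unimodal_decomposition S f n vs"
     "\<forall>i<n. \<forall>(l, g)\<in>E. \<exists>\<alpha> \<beta>. \<forall>\<tau>\<in>{0..l}. vs i (g \<tau>) = \<alpha> * \<tau> + \<beta>"
    using main_ind[OF T assms(4) assms(5) fmtD(4)[OF T] order_refl] by blast
  have "\<exists>v \<in> V. \<forall>x \<in> S. vs i x \<le> vs i v" if i: "i < n" for i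
  proof -
    have "unimodal S (vs i)" using vs(1) i unfolding unimodal_decomposition_def by auto
    then obtain x1 where "x1 \<in> S" unfolding unimodal_def by blast
    have SV: "S = V \<union> (\<Union>e \<in> E. open_edge e)" using fmtD(8)[OF T] .
    have "V \<noteq> {}"
    proof
      assume "V = {}"
      then obtain e where "e \<in> E" "x1 \<in> open_edge e" using \<open>x1 \<in> S\<close> SV by auto
      moreover obtain l g where "e = (l, g)" by fastforce
      ultimately show False using edge_props(5)[OF T] \<open>V = {}\<close> by blast
    qed
    have finV: "finite V" using fmtD(3)[OF T] .
    define mx where "mx = Max (vs i ` V)"
    have "mx \<in> vs i ` V" unfolding mx_def using finV \<open>V \<noteq> {}\<close> by (intro Max_in) auto
    then obtain v where v: "v \<in> V" "vs i v = mx" by auto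
    have vmax: "vs i w \<le> vs i v" if "w \<in> V" for w
      using Max_ge[of "vs i ` V"] finV that v unfolding mx_def by auto
    have "\<forall>x \<in> S. vs i x \<le> vs i v"
    proof
      fix x assume x: "x \<in> S"
      show "vs i x \<le> vs i v"
      proof (cases "x \<in> V")
        case True then show ?thesis by (rule vmax)
      next
        case False
        then obtain e where e: "e \<in> E" "x \<in> open_edge e" using x SV by auto
        obtain l g where lg: "e = (l, g)" by fastforce
        then obtain \<tau> where \<tau>: "\<tau> \<in> {0<..<l}" "x = g \<tau>" using e by (auto simp: open_edge_def)
        have eE: "(l, g) \<in> E" using e lg by simp
        obtain \<alpha> \<beta> where ab: "\<forall>\<tau>\<in>{0..l}. vs i (g \<tau>) = \<alpha> * \<tau> + \<beta>" using vs(2) i eE by fastforce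
        have "vs i x = \<alpha> * \<tau> + \<beta>" using ab \<tau> by auto
        also have "\<dots> \<le> max (\<alpha> * 0 + \<beta>) (\<alpha> * l + \<beta>)" using \<tau> by (intro affine_le_max) auto
        also have "\<dots> = max (vs i (g 0)) (vs i (g l))" using ab edge_props(1)[OF T eE] by simp
        also have "\<dots> \<le> vs i v" using vmax edge_props(5,6)[OF T eE] by simp
        finally show ?thesis .
      qed
    qed
    then show ?thesis using v by blast
  qed
  then show ?thesis using vs(1) by blast
qed

end
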